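(* Let $n\ge 16$ be even and let $W_{4,n}$ be the $4$-regular Kn\"odel graph. If $n\equiv 0\pmod{10}$ or $n\equiv 4 \pmod{10}$, then $W_{4,n}$ is $\gamma$-stable.
   Context: For an even integer $n\ge 2$ and $1\le\Delta\le\lfloor\log_2 n\rfloor$, the Kn\"odel graph $W_{\Delta,n}$ is the $\Delta$-regular bipartite graph on the $n$ vertices $(i,j)$, $i\in\{1,2\}$, $0\le j\le n/2-1$, in which for every $j$ the vertex $(1,j)$ is adjacent to the vertices $(2,(j+2^k-1)\bmod (n/2))$ for $k=0,1,\dots,\Delta-1$ (and there are no other edges); in particular $W_{4,n}$ is defined for even $n\ge 16$. A set $D$ of vertices of a graph $G$ is dominating if every vertex not in $D$ is adjacent to a vertex of $D$; $\gamma(G)$ is the minimum size of a dominating set. A graph $G$ is $\gamma$-stable if $\gamma(G-u)=\gamma(G)$ for every vertex $u$ of $G$, where $G-u$ is the graph obtained by deleting $u$. *)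

theory Defs
  imports Main
begin

(* A (simple, undirected) graph is given by a vertex set V and an adjacency
   relation E; only the restriction of E to V matters. *)

definition dominating :: "'a set \<Rightarrow> ('a \<Rightarrow> 'a \<Rightarrow> bool) \<Rightarrow> 'a set \<Rightarrow> bool" where
  "dominating V E D \<longleftrightarrow> D \<subseteq> V \<and> (\<forall>v\<in>V - D. \<exists>d\<in>D. E v d)"

(* domination number: minimum size of a dominating set (V assumed finite) *)
definition domination_number :: "'a set \<Rightarrow> ('a \<Rightarrow> 'a \<Rightarrow> bool) \<Rightarrow> nat" where
  "domination_number V E = Min {card D | D. dominating V E D}"

definition gamma_stable :: "'a set \<Rightarrow> ('a \<Rightarrow> 'a \<Rightarrow> bool) \<Rightarrow> bool" where
  "gamma_stable V E \<longleftrightarrow>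
     (\<forall>u\<in>V. domination_number (V - {u}) E = domination_number V E)"

definition knodel_vertices :: "nat \<Rightarrow> (nat \<times> nat) set" where
  "knodel_vertices n = {(i, j). i \<in> {1, 2} \<and> j < n div 2}"

definition knodel_edge0 :: "nat \<Rightarrow> nat \<Rightarrow> nat \<times> nat \<Rightarrow> nat \<times> nat \<Rightarrow> bool" where
  "knodel_edge0 \<Delta> n x y \<longleftrightarrow>
     fst x = 1 \<and> fst y = 2 \<and>
     (\<exists>k<\<Delta>. snd y = (snd x + 2 ^ k - 1) mod (n div 2))"

definition knodel_adj :: "nat \<Rightarrow> nat \<Rightarrow> nat \<times> nat \<Rightarrow> nat \<times> nat \<Rightarrow> bool" where
  "knodel_adj \<Delta> n x y \<longleftrightarrow> knodel_edge0 \<Delta> n x y \<or> knodel_edge0 \<Delta> n y x"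

end

theory Submission
  imports Defs "HOL-Number_Theory.Cong"
begin


definition OS :: "nat set" where "OS = {0,1,3,7}"

lemma OS_img: "(\<lambda>k::nat. (2::nat)^k - 1) ` {..<4} = OS"
proof -
  have "{..<(4::nat)} = {0,1,2,3}" by auto
  then show ?thesis unfolding OS_def by simp
qed

lemma ex_k_iff: "(\<exists>k<(4::nat). y = (x + 2^k - 1) mod m) \<longleftrightarrow> (\<exists>r\<in>OS. y = (x + r) mod (m::nat))"
proof -
  have e: "\<And>k::nat. x + 2^k - 1 = x + (2^k - 1)" by (simp add: Nat.add_diff_assoc)
  have "(\<exists>k<(4::nat). y = (x + 2^k - 1) mod m) \<longleftrightarrow> (\<exists>r\<in>(\<lambda>k::nat. (2::nat)^k - 1) ` {..<4}. y = (x + r) mod m)"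
    unfolding e by auto
  then show ?thesis unfolding OS_img .
qed

lemma adj_iff:
  "knodel_adj 4 n (a,x) (b,y) \<longleftrightarrow>
     (a = 1 \<and> b = 2 \<and> (\<exists>r\<in>OS. y = (x + r) mod (n div 2))) \<or>
     (a = 2 \<and> b = 1 \<and> (\<exists>r\<in>OS. x = (y + r) mod (n div 2)))"
  unfolding knodel_adj_def knodel_edge0_def using ex_k_iff by auto

lemma mod_cancel_sub:
  fixes x y c e m :: nat
  assumes "(x + c) mod m = (y + e) mod m" "e \<le> c"
  shows "(x + (c - e)) mod m = y mod m"
proof -
  have "[(x + (c - e)) + e = y + e] (mod m)" using assms by (simp add: cong_def)
  then have "[x + (c - e) = y] (mod m)" using cong_add_rcancel_nat by blast
  then show ?thesis by (simp add: cong_def)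
qed

lemma mod_add_neq:
  fixes i d m :: nat
  assumes "0 < d" "d < m"
  shows "(i + d) mod m \<noteq> i mod m"
proof
  assume "(i + d) mod m = i mod m"
  then have "[i + d = i + 0] (mod m)" by (simp add: cong_def)
  then have "[d = 0] (mod m)" using cong_add_lcancel_nat by blast
  then show False using assms by (simp add: cong_def)
qed

lemma mod_back:
  fixes i r m :: nat
  assumes "r \<le> m"
  shows "((i + m - r) mod m + r) mod m = i mod m"
proof -
  have "((i + m - r) mod m + r) mod m = (i + m - r + r) mod m" by (simp add: mod_add_left_eq)
  also have "i + m - r + r = i + m" using assms by simp
  finally show ?thesis by simp
qed



lemma iter5:
  fixes m :: nat
  assumes cl: "\<forall>i\<in>S. (i + 5) mod m \<in> S" and "i \<in> S" and "i < m"
  shows "(i + 5*k) mod m \<in> S"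
proof (induction k)
  case 0
  show ?case using assms(2,3) by simp
next
  case (Suc k)
  have "i + 5 * Suc k = (i + 5*k) + 5" by simp
  then have "(i + 5 * Suc k) mod m = ((i + 5*k) mod m + 5) mod m" by (simp only: mod_add_left_eq)
  then show ?case using cl Suc by simp
qed

lemma gap:
  fixes m t :: nat and S :: "nat set"
  assumes m: "m = 5*t + 2" and t: "t \<ge> 2" and S: "S \<subseteq> {..<m}" and c: "card S \<ge> t"
  shows "\<exists>i\<in>S. \<exists>d\<in>{1,2,3,4,6,7::nat}. (i + d) mod m \<in> S"
proof (rule ccontr)
  assume "\<not> ?thesis"
  then have no: "\<And>i d. i \<in> S \<Longrightarrow> d \<in> {1,2,3,4,6,7} \<Longrightarrow> (i + d) mod m \<notin> S" by blast
  have fin: "finite S" using S finite_subset by blast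
  have ne: "S \<noteq> {}" using c t by auto
  have lt: "\<And>i. i \<in> S \<Longrightarrow> i < m" using S by auto
  have "\<exists>i0\<in>S. (i0 + 5) mod m \<notin> S"
  proof (rule ccontr)
    assume "\<not> ?thesis"
    then have cl: "\<forall>i\<in>S. (i + 5) mod m \<in> S" by blast
    obtain i where i: "i \<in> S" using ne by blast
    have "(i + 5*(2*t+1)) mod m \<in> S" using iter5[OF cl i lt[OF i]] .
    moreover have "i + 5*(2*t+1) = (i + 1) + 2*m" using m by simp
    moreover have "((i + 1) + 2*m) mod m = (i + 1) mod m" by simp
    ultimately have "(i + 1) mod m \<in> S" by metis
    then show False using no[OF i, of 1] by simp
  qed
  then obtain i0 where i0: "i0 \<in> S" "(i0 + 5) mod m \<notin> S" by blast
  define J where "J i = (\<lambda>e. (i + e) mod m) ` {..<5}" for i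
  have cardJ: "card (J i) = 5" for i
  proof -
    have "inj_on (\<lambda>e. (i + e) mod m) {..<5}"
    proof (rule inj_onI)
      fix e e' assume "e \<in> {..<(5::nat)}" "e' \<in> {..<(5::nat)}" "(i + e) mod m = (i + e') mod m"
      then have "[i + e = i + e'] (mod m)" by (simp add: cong_def)
      then have "[e = e'] (mod m)" using cong_add_lcancel_nat by blast
      moreover have "e < m" "e' < m" using \<open>e \<in> _\<close> \<open>e' \<in> _\<close> m t by auto
      ultimately show "e = e'" by (simp add: cong_def)
    qed
    then show ?thesis unfolding J_def by (simp add: card_image)
  qed
  have key: "\<And>i x c e. x \<in> S \<Longrightarrow> i \<in> S \<Longrightarrow> (x + c) mod m = (i + e) mod m \<Longrightarrow> e \<le> c \<Longrightarrow>
      i = (x + (c - e)) mod m"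
    using mod_cancel_sub lt by (metis mod_less)
  have disj: "J i \<inter> J i' = {}" if "i \<in> S" "i' \<in> S" "i \<noteq> i'" for i i'
  proof (rule ccontr)
    assume "J i \<inter> J i' \<noteq> {}"
    then obtain e e' where e: "e < 5" "e' < 5" "(i + e) mod m = (i' + e') mod m" unfolding J_def by auto
    show False
    proof (cases "e' \<le> e")
      case True
      then have "i' = (i + (e - e')) mod m" using key[OF that(1) that(2) e(3)] by simp
      moreover have "e - e' \<noteq> 0" using True that(3) \<open>i' = _\<close> lt[OF that(1)] by auto
      then have dd: "e - e' \<in> {1,2,3,4,6,7}" using e(1) by auto
      show False using no[OF that(1) dd] that(2) \<open>i' = _\<close> by simp
    next
      case False
      then have "i = (i' + (e' - e)) mod m" using key[OF that(2) that(1) e(3)[symmetric]] by simp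
      moreover have "e' - e \<noteq> 0" using False by auto
      then have dd: "e' - e \<in> {1,2,3,4,6,7}" using e(2) by auto
      show False using no[OF that(2) dd] that(1) \<open>i = _\<close> by simp
    qed
  qed
  have cardU: "card (\<Union>i\<in>S. J i) = 5 * card S"
    using card_UN_disjoint[OF fin, of J] disj cardJ unfolding J_def by auto
  define X where "X = {(i0 + 5) mod m, (i0 + 6) mod m, (i0 + 7) mod m}"
  have cardX: "card X = 3"
  proof -
    have m7: "7 < m" using m t by simp
    have a0: "(i0 + 5 + 1) mod m \<noteq> (i0 + 5) mod m" by (rule mod_add_neq) (use m7 in auto)
    have a: "(i0 + 5) mod m \<noteq> (i0 + 6) mod m" using a0 by (simp add: add.assoc add.commute)
    have b0: "(i0 + 6 + 1) mod m \<noteq> (i0 + 6) mod m" by (rule mod_add_neq) (use m7 in auto)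
    have b: "(i0 + 6) mod m \<noteq> (i0 + 7) mod m" using b0 by (simp add: add.assoc add.commute)
    have c0: "(i0 + 5 + 2) mod m \<noteq> (i0 + 5) mod m" by (rule mod_add_neq) (use m7 in auto)
    have cc: "(i0 + 5) mod m \<noteq> (i0 + 7) mod m" using c0 by (simp add: add.assoc add.commute)
    show ?thesis unfolding X_def using a b cc by auto
  qed
  have XJ: "X \<inter> (\<Union>i\<in>S. J i) = {}"
  proof (rule ccontr)
    assume "X \<inter> (\<Union>i\<in>S. J i) \<noteq> {}"
    then obtain i e c where ie: "i \<in> S" "e < 5" "c \<in> {5,6,7::nat}" "(i0 + c) mod m = (i + e) mod m"
      unfolding X_def J_def by auto
    have ec: "e \<le> c" using ie by auto
    have "i = (i0 + (c - e)) mod m" using key[OF i0(1) ie(1) ie(4) ec] .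
    moreover have "c - e = 5 \<or> c - e \<in> {1,2,3,4,6,7}" using ie by auto
    ultimately show False using no[OF i0(1)] i0(2) ie(1) by metis
  qed
  have sub: "X \<union> (\<Union>i\<in>S. J i) \<subseteq> {..<m}" unfolding X_def J_def using m by auto
  have "card (X \<union> (\<Union>i\<in>S. J i)) = 3 + 5 * card S"
    using card_Un_disjoint[of X "\<Union>i\<in>S. J i"] XJ cardX cardU fin unfolding X_def J_def by auto
  moreover have "card (X \<union> (\<Union>i\<in>S. J i)) \<le> m" using card_mono[OF _ sub] by simp
  ultimately show False using m c by linarith
qed



lemma V_char: "(a,x) \<in> knodel_vertices n \<longleftrightarrow> (a = 1 \<or> a = 2) \<and> x < n div 2"
  unfolding knodel_vertices_def by auto

lemma V_finite: "finite (knodel_vertices n)"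
proof -
  have "knodel_vertices n \<subseteq> {1,2} \<times> {..<n div 2}" unfolding knodel_vertices_def by auto
  then show ?thesis using finite_subset by blast
qed

lemma card_OS: "card OS = 4" unfolding OS_def by simp

definition Rset :: "nat \<Rightarrow> nat \<Rightarrow> nat set" where
  "Rset m i = (\<lambda>r. (i + r) mod m) ` OS"
definition Lset :: "nat \<Rightarrow> nat \<Rightarrow> nat set" where
  "Lset m i = {j. j < m \<and> (\<exists>r\<in>OS. i = (j + r) mod m)}"

lemma OS_le: "r \<in> OS \<Longrightarrow> r \<le> 7" unfolding OS_def by auto

lemma card_R: "card (Rset m i) \<le> 4" "finite (Rset m i)"
proof -
  have "card (Rset m i) \<le> card OS" unfolding Rset_def by (rule card_image_le) (simp add: OS_def)
  then show "card (Rset m i) \<le> 4" using card_OS by simp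
  show "finite (Rset m i)" unfolding Rset_def OS_def by simp
qed

lemma L_sub: assumes "7 < m" shows "Lset m i \<subseteq> (\<lambda>r. (i + (m - r)) mod m) ` OS"
proof
  fix j assume "j \<in> Lset m i"
  then obtain r where r: "j < m" "r \<in> OS" "i = (j + r) mod m" unfolding Lset_def by auto
  have "(i + (m - r)) mod m = (j + r + (m - r)) mod m" using r(3) by (simp add: mod_add_left_eq)
  also have "j + r + (m - r) = j + m" using OS_le[OF r(2)] assms by simp
  finally have "(i + (m - r)) mod m = j" using r(1) by simp
  then show "j \<in> (\<lambda>r. (i + (m - r)) mod m) ` OS" using r(2) by force
qed

lemma card_L: assumes "7 < m" shows "card (Lset m i) \<le> 4" "finite (Lset m i)"
proof -
  have f: "finite OS" unfolding OS_def by simp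
  show "card (Lset m i) \<le> 4"
  proof -
    have "card (Lset m i) \<le> card ((\<lambda>r. (i + (m - r)) mod m) ` OS)"
      using card_mono[OF finite_imageI[OF f] L_sub[OF assms]] by blast
    also have "\<dots> \<le> card OS" using card_image_le[OF f] by blast
    finally show ?thesis using card_OS by simp
  qed
  show "finite (Lset m i)" unfolding Lset_def by simp
qed

lemma card_UN_lt:
  assumes fin: "finite I" and fF: "\<And>i. finite (F i)" and i: "i1 \<in> I" "i2 \<in> I" "i1 \<noteq> i2"
    and ov: "F i1 \<inter> F i2 \<noteq> {}"
  shows "card (\<Union>i\<in>I. F i) < (\<Sum>i\<in>I. card (F i))"
proof -
  let ?I = "I - {i1, i2}"
  have U: "(\<Union>i\<in>I. F i) = (F i1 \<union> F i2) \<union> (\<Union>i\<in>?I. F i)" using i by auto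
  have "card (\<Union>i\<in>I. F i) \<le> card (F i1 \<union> F i2) + card (\<Union>i\<in>?I. F i)"
    unfolding U by (rule card_Un_le)
  also have "card (\<Union>i\<in>?I. F i) \<le> (\<Sum>i\<in>?I. card (F i))" using card_UN_le fin by blast
  also have "card (F i1 \<union> F i2) < card (F i1) + card (F i2)"
  proof -
    have "card (F i1 \<union> F i2) + card (F i1 \<inter> F i2) = card (F i1) + card (F i2)"
      using card_Un_Int[OF fF fF] by simp
    moreover have "card (F i1 \<inter> F i2) > 0" using ov fF by (simp add: card_gt_0_iff)
    ultimately show ?thesis by linarith
  qed
  moreover have "(\<Sum>i\<in>I. card (F i)) = card (F i1) + card (F i2) + (\<Sum>i\<in>?I. card (F i))"
  proof -
    have "(\<Sum>i\<in>I. card (F i)) = card (F i1) + (\<Sum>i\<in>I - {i1}. card (F i))"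
      using sum.remove[OF fin i(1)] by simp
    also have "(\<Sum>i\<in>I - {i1}. card (F i)) = card (F i2) + (\<Sum>i\<in>I - {i1} - {i2}. card (F i))"
      using sum.remove[of "I - {i1}" i2] fin i by simp
    also have "I - {i1} - {i2} = ?I" by auto
    finally show ?thesis by simp
  qed
  ultimately show ?thesis by linarith
qed

lemma cover_count:
  assumes X: "X \<subseteq> A \<union> (\<Union>i\<in>B. F i)" and fA: "finite A" and fB: "finite B"
    and fF: "\<And>i. finite (F i)" and cF: "\<And>i. card (F i) \<le> 4"
  shows "card X + (if (\<exists>i1\<in>B. \<exists>i2\<in>B. i1 \<noteq> i2 \<and> F i1 \<inter> F i2 \<noteq> {}) then 1 else 0)
           \<le> card A + 4 * card B"
proof -
  have fU: "finite (A \<union> (\<Union>i\<in>B. F i))" using fA fB fF by auto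
  have cX: "card X \<le> card A + card (\<Union>i\<in>B. F i)"
    using card_mono[OF fU X] card_Un_le[of A "\<Union>i\<in>B. F i"] by linarith
  have s4: "(\<Sum>i\<in>B. card (F i)) \<le> 4 * card B"
    using sum_bounded_above[of B "\<lambda>i. card (F i)" 4] cF by (simp add: mult.commute)
  show ?thesis
  proof (cases "\<exists>i1\<in>B. \<exists>i2\<in>B. i1 \<noteq> i2 \<and> F i1 \<inter> F i2 \<noteq> {}")
    case True
    then obtain i1 i2 where "i1 \<in> B" "i2 \<in> B" "i1 \<noteq> i2" "F i1 \<inter> F i2 \<noteq> {}" by blast
    then have "card (\<Union>i\<in>B. F i) < (\<Sum>i\<in>B. card (F i))" using card_UN_lt[of B F i1 i2, OF fB fF] by blast
    then show ?thesis using True cX s4 by simp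
  next
    case False
    then have "(if (\<exists>i1\<in>B. \<exists>i2\<in>B. i1 \<noteq> i2 \<and> F i1 \<inter> F i2 \<noteq> {}) then 1 else 0) = (0::nat)" by simp
    then show ?thesis using cX s4 card_UN_le[OF fB, of F] by linarith
  qed
qed



lemma cardD:
  assumes "D \<subseteq> knodel_vertices n"
  shows "card D = card {j. (1,j) \<in> D} + card {j. (2::nat,j) \<in> D}"
proof -
  let ?A = "{j. (1::nat,j) \<in> D}" and ?B = "{j. (2::nat,j) \<in> D}"
  have sA: "?A \<subseteq> {..<n div 2}"
  proof
    fix j assume "j \<in> ?A" then have "(1,j) \<in> knodel_vertices n" using assms by blast
    then show "j \<in> {..<n div 2}" unfolding V_char by simp
  qed
  have sB: "?B \<subseteq> {..<n div 2}"
  proof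
    fix j assume "j \<in> ?B" then have "(2,j) \<in> knodel_vertices n" using assms by blast
    then show "j \<in> {..<n div 2}" unfolding V_char by simp
  qed
  have fA: "finite ?A" using sA finite_subset by blast
  have fB: "finite ?B" using sB finite_subset by blast
  have D: "D = Pair (1::nat) ` ?A \<union> Pair (2::nat) ` ?B"
  proof
    show "D \<subseteq> Pair (1::nat) ` ?A \<union> Pair (2::nat) ` ?B"
    proof
      fix x assume "x \<in> D"
      obtain a j where x: "x = (a,j)" by (cases x)
      then have "(a,j) \<in> knodel_vertices n" using assms \<open>x \<in> D\<close> by blast
      then have "a = 1 \<or> a = 2" unfolding V_char by simp
      then show "x \<in> Pair (1::nat) ` ?A \<union> Pair (2::nat) ` ?B" using x \<open>x \<in> D\<close> by auto
    qed
    show "Pair (1::nat) ` ?A \<union> Pair (2::nat) ` ?B \<subseteq> D" by auto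
  qed
  have dj: "Pair (1::nat) ` ?A \<inter> Pair (2::nat) ` ?B = {}" by auto
  have c1: "card (Pair (1::nat) ` ?A) = card ?A" by (rule card_image) (simp add: inj_on_def)
  have c2: "card (Pair (2::nat) ` ?B) = card ?B" by (rule card_image) (simp add: inj_on_def)
  have "card (Pair (1::nat) ` ?A \<union> Pair (2::nat) ` ?B) = card (Pair (1::nat) ` ?A) + card (Pair (2::nat) ` ?B)"
    by (rule card_Un_disjoint) (use fA fB dj in simp_all)
  then show ?thesis using D c1 c2 by simp
qed

lemma side1:
  assumes dom: "dominating V' (knodel_adj 4 n) D" and VV: "V' \<subseteq> knodel_vertices n"
  shows "{j. j < n div 2 \<and> (1,j) \<in> V'} \<subseteq> {j. (1,j) \<in> D} \<union> (\<Union>i\<in>{j. (2,j) \<in> D}. Lset (n div 2) i)"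
proof
  fix j assume j: "j \<in> {j. j < n div 2 \<and> (1,j) \<in> V'}"
  show "j \<in> {j. (1,j) \<in> D} \<union> (\<Union>i\<in>{j. (2,j) \<in> D}. Lset (n div 2) i)"
  proof (cases "(1,j) \<in> D")
    case True then show ?thesis by simp
  next
    case False
    then have "(1,j) \<in> V' - D" using j by simp
    then have "\<exists>d\<in>D. knodel_adj 4 n (1,j) d" using dom unfolding dominating_def by blast
    then obtain d where d: "d \<in> D" "knodel_adj 4 n (1,j) d" by blast
    obtain b y where dy: "d = (b,y)" by (cases d)
    then have "b = 2" "\<exists>r\<in>OS. y = (j + r) mod (n div 2)" using d(2) adj_iff by auto
    then show ?thesis using d(1) dy j unfolding Lset_def by auto
  qed
qed

lemma side2:
  assumes dom: "dominating V' (knodel_adj 4 n) D" and VV: "V' \<subseteq> knodel_vertices n"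
  shows "{j. j < n div 2 \<and> (2,j) \<in> V'} \<subseteq> {j. (2,j) \<in> D} \<union> (\<Union>i\<in>{j. (1,j) \<in> D}. Rset (n div 2) i)"
proof
  fix j assume j: "j \<in> {j. j < n div 2 \<and> (2,j) \<in> V'}"
  show "j \<in> {j. (2,j) \<in> D} \<union> (\<Union>i\<in>{j. (1,j) \<in> D}. Rset (n div 2) i)"
  proof (cases "(2,j) \<in> D")
    case True then show ?thesis by simp
  next
    case False
    then have "(2,j) \<in> V' - D" using j by simp
    then have "\<exists>d\<in>D. knodel_adj 4 n (2,j) d" using dom unfolding dominating_def by blast
    then obtain d where d: "d \<in> D" "knodel_adj 4 n (2,j) d" by blast
    obtain b y where dy: "d = (b,y)" by (cases d)
    then have "b = 1" "\<exists>r\<in>OS. j = (y + r) mod (n div 2)" using d(2) adj_iff by auto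
    then show ?thesis using d(1) dy j unfolding Rset_def by auto
  qed
qed


lemma pairs_d:
  assumes "d \<in> {1,2,3,4,6,7::nat}"
  shows "\<exists>r\<in>OS. \<exists>r'\<in>OS. r = r' + d"
proof -
  have o: "0 \<in> OS" "1 \<in> OS" "3 \<in> OS" "7 \<in> OS" unfolding OS_def by auto
  have "d = 1 \<or> d = 2 \<or> d = 3 \<or> d = 4 \<or> d = 6 \<or> d = 7" using assms by auto
  then show ?thesis
  proof (elim disjE)
    assume "d = 1" then show ?thesis using o(1,2) by (intro bexI[of _ 1] bexI[of _ 0]) auto
  next
    assume "d = 2" then show ?thesis using o(2,3) by (intro bexI[of _ 3] bexI[of _ 1]) auto
  next
    assume "d = 3" then show ?thesis using o(1,3) by (intro bexI[of _ 3] bexI[of _ 0]) auto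
  next
    assume "d = 4" then show ?thesis using o(3,4) by (intro bexI[of _ 7] bexI[of _ 3]) auto
  next
    assume "d = 6" then show ?thesis using o(2,4) by (intro bexI[of _ 7] bexI[of _ 1]) auto
  next
    assume "d = 7" then show ?thesis using o(1,4) by (intro bexI[of _ 7] bexI[of _ 0]) auto
  qed
qed


lemma collR:
  assumes "d \<in> {1,2,3,4,6,7::nat}"
  shows "Rset m i \<inter> Rset m ((i + d) mod m) \<noteq> {}"
proof -
  obtain r r' where r: "r \<in> OS" "r' \<in> OS" "r = r' + d" using pairs_d[OF assms] by blast
  have iR: "(i + r) mod m \<in> Rset m i" unfolding Rset_def using r(1) by blast
  have "((i + d) mod m + r') mod m = (i + d + r') mod m" by (simp add: mod_add_left_eq)
  moreover have "i + d + r' = i + r" using r(3) by simp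
  ultimately have "((i + d) mod m + r') mod m = (i + r) mod m" by simp
  then have "(i + r) mod m \<in> Rset m ((i + d) mod m)" unfolding Rset_def using r(2) by force
  then show ?thesis using iR by blast
qed

lemma collL:
  assumes "d \<in> {1,2,3,4,6,7::nat}" "7 < m" "i < m"
  shows "Lset m i \<inter> Lset m ((i + d) mod m) \<noteq> {}"
proof -
  obtain r r' where r: "r \<in> OS" "r' \<in> OS" "r = r' + d" using pairs_d[OF assms(1)] by blast
  have r7: "r' \<le> 7" "r \<le> 7" using OS_le r by auto
  define j where "j = (i + (m - r')) mod m"
  have jm: "j < m" unfolding j_def using assms by simp
  have "(j + r') mod m = (i + (m - r') + r') mod m" unfolding j_def by (simp add: mod_add_left_eq)
  also have "i + (m - r') + r' = i + m" using r7 assms by simp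
  finally have "i = (j + r') mod m" using assms(3) by simp
  then have jL: "j \<in> Lset m i" unfolding Lset_def using jm r(2) by blast
  have "(j + r) mod m = (i + (m - r') + r) mod m" unfolding j_def by (simp add: mod_add_left_eq)
  also have "i + (m - r') + r = (i + d) + m" using r7 r(3) assms by simp
  finally have "(i + d) mod m = (j + r) mod m" by simp
  then have "j \<in> Lset m ((i + d) mod m)" unfolding Lset_def using jm r(1) by blast
  then show ?thesis using jL by blast
qed

lemma neq_d:
  assumes "d \<in> {1,2,3,4,6,7::nat}" "7 < m" "i < m"
  shows "(i + d) mod m \<noteq> i"
proof -
  have "0 < d" "d < m" using assms by auto
  then have "(i + d) mod m \<noteq> i mod m" by (rule mod_add_neq)
  then show ?thesis using assms(3) by simp
qed

lemma sideA_sub: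
  assumes "D \<subseteq> knodel_vertices n"
  shows "{j. (a,j) \<in> D} \<subseteq> {..<n div 2}"
proof
  fix j assume "j \<in> {j. (a,j) \<in> D}" then have "(a,j) \<in> knodel_vertices n" using assms by blast
  then show "j \<in> {..<n div 2}" unfolding V_char by simp
qed

lemma side_cards:
  assumes "u \<in> knodel_vertices n"
  shows "(card {j. j < n div 2 \<and> (1,j) \<in> knodel_vertices n - {u}} = n div 2 - 1 \<and>
          card {j. j < n div 2 \<and> (2,j) \<in> knodel_vertices n - {u}} = n div 2) \<or>
         (card {j. j < n div 2 \<and> (1,j) \<in> knodel_vertices n - {u}} = n div 2 \<and>
          card {j. j < n div 2 \<and> (2,j) \<in> knodel_vertices n - {u}} = n div 2 - 1)"
proof -
  obtain a h where u: "u = (a,h)" by (cases u)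
  then have ah: "a = 1 \<or> a = 2" "h < n div 2" using assms V_char by auto
  show ?thesis
  proof (cases "a = 1")
    case True
    have "{j. j < n div 2 \<and> (1,j) \<in> knodel_vertices n - {u}} = {..<n div 2} - {h}"
      using u True by (auto simp: V_char)
    moreover have "{j. j < n div 2 \<and> (2,j) \<in> knodel_vertices n - {u}} = {..<n div 2}"
      using u True by (auto simp: V_char)
    ultimately show ?thesis using ah by simp
  next
    case False
    then have a2: "a = 2" using ah by simp
    have "{j. j < n div 2 \<and> (2,j) \<in> knodel_vertices n - {u}} = {..<n div 2} - {h}"
      using u a2 by (auto simp: V_char)
    moreover have "{j. j < n div 2 \<and> (1,j) \<in> knodel_vertices n - {u}} = {..<n div 2}"
      using u a2 by (auto simp: V_char)
    ultimately show ?thesis using ah by simp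
  qed
qed



lemma arith4:
  fixes x1 x2 a b cA cB m t :: nat
  assumes m: "m = 5*t+2" and h1: "x1 + cB \<le> a + 4*b" and h2: "x2 + cA \<le> b + 4*a"
    and x: "(x1 = m - 1 \<and> x2 = m) \<or> (x1 = m \<and> x2 = m - 1)"
    and iA: "t \<le> a \<longrightarrow> cA = 1" and iB: "t \<le> b \<longrightarrow> cB = 1" and ab: "a + b \<le> 2*t+1" and t: "t \<ge> 2"
  shows False
proof -
  have xx: "x1 \<ge> 5*t+1" "x2 \<ge> 5*t+1" "x1 + x2 = 10*t+3" using x m by auto
  consider "a < t" | "b < t" | "t \<le> a" "t \<le> b" by linarith
  then show False
  proof cases
    case 1 then show False using h2 ab xx by linarith
  next
    case 2 then show False using h1 ab xx by linarith
  next
    case 3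
    then have c: "cA = 1" "cB = 1" using iA iB by auto
    have s: "a + b = 2*t+1" using h1 h2 c xx ab by linarith
    show False
    proof (cases "x1 = m")
      case True
      then have "x2 = m - 1" using x by auto
      then show False using True h1 h2 c s m
        by (cases "b \<le> t"; cases "a \<le> t") linarith+
    next
      case False
      then have "x1 = m - 1" "x2 = m" using x by auto
      then show False using h1 h2 c s m
        by (cases "b \<le> t"; cases "a \<le> t") linarith+
    qed
  qed
qed

lemma arith0:
  fixes x1 x2 a b cA cB m t :: nat
  assumes m: "m = 5*t" and h1: "x1 + cB \<le> a + 4*b" and h2: "x2 + cA \<le> b + 4*a"
    and x: "(x1 = m - 1 \<and> x2 = m) \<or> (x1 = m \<and> x2 = m - 1)" and t: "t \<ge> 2"
  shows "2*t \<le> a + b"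
proof (rule ccontr)
  assume "\<not> 2*t \<le> a + b"
  then have "a + b + 1 \<le> 2*t" by linarith
  moreover have "x1 + x2 = 10*t - 1" using x m t by auto
  ultimately show False using h1 h2 t by linarith
qed



lemma LB_data:
  fixes n :: nat
  assumes m7: "7 < n div 2" and u: "u \<in> knodel_vertices n"
    and dom: "dominating (knodel_vertices n - {u}) (knodel_adj 4 n) D"
  defines "A \<equiv> {j. (1::nat,j) \<in> D}" and "B \<equiv> {j. (2::nat,j) \<in> D}"
  defines "x1 \<equiv> card {j. j < n div 2 \<and> (1,j) \<in> knodel_vertices n - {u}}"
    and "x2 \<equiv> card {j. j < n div 2 \<and> (2,j) \<in> knodel_vertices n - {u}}"
  defines "collB \<equiv> (\<exists>i1\<in>B. \<exists>i2\<in>B. i1 \<noteq> i2 \<and> Lset (n div 2) i1 \<inter> Lset (n div 2) i2 \<noteq> {})"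
    and "collA \<equiv> (\<exists>i1\<in>A. \<exists>i2\<in>A. i1 \<noteq> i2 \<and> Rset (n div 2) i1 \<inter> Rset (n div 2) i2 \<noteq> {})"
  shows "card D = card A + card B"
    and "x1 + (if collB then 1 else 0) \<le> card A + 4 * card B"
    and "x2 + (if collA then 1 else 0) \<le> card B + 4 * card A"
    and "(x1 = n div 2 - 1 \<and> x2 = n div 2) \<or> (x1 = n div 2 \<and> x2 = n div 2 - 1)"
    and "A \<subseteq> {..<n div 2}" and "B \<subseteq> {..<n div 2}"
proof -
  have DV: "D \<subseteq> knodel_vertices n" using dom unfolding dominating_def by auto
  show "card D = card A + card B" using cardD[OF DV] unfolding A_def B_def .
  show sA: "A \<subseteq> {..<n div 2}" unfolding A_def by (rule sideA_sub[OF DV])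
  show sB: "B \<subseteq> {..<n div 2}" unfolding B_def by (rule sideA_sub[OF DV])
  have fA: "finite A" using sA finite_subset by blast
  have fB: "finite B" using sB finite_subset by blast
  have VV: "knodel_vertices n - {u} \<subseteq> knodel_vertices n" by blast
  show "x1 + (if collB then 1 else 0) \<le> card A + 4 * card B"
    unfolding x1_def collB_def
    by (rule cover_count[OF side1[OF dom VV, folded A_def B_def] fA fB card_L(2)[OF m7] card_L(1)[OF m7]])
  show "x2 + (if collA then 1 else 0) \<le> card B + 4 * card A"
    unfolding x2_def collA_def
    by (rule cover_count[OF side2[OF dom VV, folded A_def B_def] fB fA card_R(2) card_R(1)])
  show "(x1 = n div 2 - 1 \<and> x2 = n div 2) \<or> (x1 = n div 2 \<and> x2 = n div 2 - 1)"
    unfolding x1_def x2_def by (rule side_cards[OF u])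
qed

lemma LB4:
  fixes n t :: nat
  assumes m: "n div 2 = 5*t+2" and t: "t \<ge> 2" and u: "u \<in> knodel_vertices n"
    and dom: "dominating (knodel_vertices n - {u}) (knodel_adj 4 n) D"
  shows "2*t+2 \<le> card D"
proof (rule ccontr)
  assume neg: "\<not> 2*t+2 \<le> card D"
  have m7: "7 < n div 2" using m t by simp
  note L = LB_data[OF m7 u dom]
  let ?A = "{j. (1::nat,j) \<in> D}" and ?B = "{j. (2::nat,j) \<in> D}"
  have iA: "t \<le> card ?A \<longrightarrow> (\<exists>i1\<in>?A. \<exists>i2\<in>?A. i1 \<noteq> i2 \<and> Rset (n div 2) i1 \<inter> Rset (n div 2) i2 \<noteq> {})"
  proof
    assume "t \<le> card ?A"
    then obtain i d where i: "i \<in> ?A" "d \<in> {1,2,3,4,6,7::nat}" "(i + d) mod (n div 2) \<in> ?A"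
      using gap[OF m t L(5)] by blast
    have "i < n div 2" using L(5) i(1) by auto
    then show "\<exists>i1\<in>?A. \<exists>i2\<in>?A. i1 \<noteq> i2 \<and> Rset (n div 2) i1 \<inter> Rset (n div 2) i2 \<noteq> {}"
      using i neq_d[OF i(2) m7] collR[OF i(2)] by metis
  qed
  have iB: "t \<le> card ?B \<longrightarrow> (\<exists>i1\<in>?B. \<exists>i2\<in>?B. i1 \<noteq> i2 \<and> Lset (n div 2) i1 \<inter> Lset (n div 2) i2 \<noteq> {})"
  proof
    assume "t \<le> card ?B"
    then obtain i d where i: "i \<in> ?B" "d \<in> {1,2,3,4,6,7::nat}" "(i + d) mod (n div 2) \<in> ?B"
      using gap[OF m t L(6)] by blast
    have im: "i < n div 2" using L(6) i(1) by auto
    then show "\<exists>i1\<in>?B. \<exists>i2\<in>?B. i1 \<noteq> i2 \<and> Lset (n div 2) i1 \<inter> Lset (n div 2) i2 \<noteq> {}"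
      using i neq_d[OF i(2) m7 im] collL[OF i(2) m7 im] by metis
  qed
  show False
    apply (rule arith4[OF m L(2) L(3) L(4)])
    using iA iB neg L(1) t by auto
qed

lemma LB0:
  fixes n t :: nat
  assumes m: "n div 2 = 5*t" and t: "t \<ge> 2" and u: "u \<in> knodel_vertices n"
    and dom: "dominating (knodel_vertices n - {u}) (knodel_adj 4 n) D"
  shows "2*t \<le> card D"
proof -
  have m7: "7 < n div 2" using m t by simp
  note L = LB_data[OF m7 u dom]
  show ?thesis using arith0[OF m L(2) L(3) L(4) t] L(1) by simp
qed



lemma adj12: "r \<in> OS \<Longrightarrow> y = (x + r) mod (n div 2) \<Longrightarrow> knodel_adj 4 n (1,x) (2,y)"
  using adj_iff by auto
lemma adj21: "r \<in> OS \<Longrightarrow> x = (y + r) mod (n div 2) \<Longrightarrow> knodel_adj 4 n (2,x) (1,y)"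
  using adj_iff by auto
lemma OS_mem: "0 \<in> OS" "1 \<in> OS" "3 \<in> OS" "7 \<in> OS" unfolding OS_def by auto

definition base :: "nat \<Rightarrow> (nat \<times> nat) set" where
  "base t = Pair 1 ` ((\<lambda>i. 5*i) ` {..<t}) \<union> Pair 2 ` ((\<lambda>i. 5*i+4) ` {..<t})"

lemma base_mem1: "q < t \<Longrightarrow> (1, 5*q) \<in> base t" unfolding base_def by auto
lemma base_mem2: "q < t \<Longrightarrow> (2, 5*q+4) \<in> base t" unfolding base_def by auto
lemma base_card: "card (base t) \<le> 2*t"
proof -
  have "card (base t) \<le> card (Pair (1::nat) ` ((\<lambda>i. 5*i) ` {..<t})) + card (Pair (2::nat) ` ((\<lambda>i. 5*i+4) ` {..<t}))"
    unfolding base_def by (rule card_Un_le)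
  also have "\<dots> \<le> t + t"
    using card_image_le[of "{..<t}" "\<lambda>i. 5*i"] card_image_le[of "{..<t}" "\<lambda>i. 5*i+4"]
      card_image_le[of "(\<lambda>i. 5*i) ` {..<t}" "Pair (1::nat)"] card_image_le[of "(\<lambda>i. 5*i+4) ` {..<t}" "Pair (2::nat)"]
    by simp
  finally show ?thesis by simp
qed
lemma base_not1: "(1, 1) \<notin> base t" unfolding base_def by auto
lemma base_not2: "(2, 0) \<notin> base t" unfolding base_def by auto
lemma base_side: "(a, x) \<in> base t \<Longrightarrow> (a = 1 \<or> a = 2) \<and> x < 5*t" unfolding base_def by auto

lemma dom0:
  assumes m: "n div 2 = 5*t" and t: "t \<ge> 2"
  shows "dominating (knodel_vertices n) (knodel_adj 4 n) (base t)"
  unfolding dominating_def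
proof (intro conjI ballI)
  show "base t \<subseteq> knodel_vertices n"
  proof
    fix v assume v: "v \<in> base t"
    obtain a x where "v = (a,x)" by (cases v)
    then show "v \<in> knodel_vertices n" using base_side[of a x t] v m by (simp add: V_char)
  qed
next
  fix v assume v: "v \<in> knodel_vertices n - base t"
  obtain a j where vj: "v = (a,j)" by (cases v)
  then have aj: "a = 1 \<or> a = 2" "j < 5*t" "(a,j) \<notin> base t" using v m V_char by auto
  define q where "q = j div 5"
  define r where "r = j mod 5"
  have jq: "j = 5*q + r" "r < 5" "q < t" unfolding q_def r_def using aj by auto
  show "\<exists>d\<in>base t. knodel_adj 4 n v d"
  proof (cases "a = 1")
    case True
    have "r = 0 \<or> r = 1 \<or> r = 2 \<or> r = 3 \<or> r = 4" using jq by auto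
    then show ?thesis
    proof (elim disjE)
      assume "r = 0" then show ?thesis using aj(3) True jq base_mem1[OF jq(3)] by auto
    next
      assume r: "r = 1"
      have "5*q+4 = (j + 3) mod (n div 2)" using jq r m by simp
      then show ?thesis using vj True base_mem2[OF jq(3)] adj12[OF OS_mem(3)] by blast
    next
      assume r: "r = 2"
      show ?thesis
      proof (cases "q + 1 < t")
        case True2: True
        have "5*(q+1)+4 = (j + 7) mod (n div 2)" using jq r m True2 by simp
        then show ?thesis using vj True base_mem2[OF True2] adj12[OF OS_mem(4)] by blast
      next
        case False
        then have "q = t - 1" using jq by simp
        then have e: "j + 7 = 4 + n div 2" using jq r m t by simp
        have "(j + 7) mod (n div 2) = (4 + n div 2) mod (n div 2)" by (simp only: e)
        also have "\<dots> = 4" using m t by simp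
        finally have "5*0+4 = (j + 7) mod (n div 2)" by simp
        moreover have "0 < t" using t by simp
        ultimately show ?thesis using vj True base_mem2 adj12[OF OS_mem(4)] by blast
      qed
    next
      assume r: "r = 3"
      have "5*q+4 = (j + 1) mod (n div 2)" using jq r m by simp
      then show ?thesis using vj True base_mem2[OF jq(3)] adj12[OF OS_mem(2)] by blast
    next
      assume r: "r = 4"
      have "5*q+4 = (j + 0) mod (n div 2)" using jq r m by simp
      then show ?thesis using vj True base_mem2[OF jq(3)] adj12[OF OS_mem(1)] by blast
    qed
  next
    case False
    then have a2: "a = 2" using aj by simp
    have "r = 0 \<or> r = 1 \<or> r = 2 \<or> r = 3 \<or> r = 4" using jq by auto
    then show ?thesis
    proof (elim disjE)
      assume r: "r = 0"
      have "j = (5*q + 0) mod (n div 2)" using jq r m by simp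
      then show ?thesis using vj a2 base_mem1[OF jq(3)] adj21[OF OS_mem(1)] by blast
    next
      assume r: "r = 1"
      have "j = (5*q + 1) mod (n div 2)" using jq r m by simp
      then show ?thesis using vj a2 base_mem1[OF jq(3)] adj21[OF OS_mem(2)] by blast
    next
      assume r: "r = 2"
      show ?thesis
      proof (cases "q = 0")
        case True
        have e: "5*(t-1) + 7 = 2 + n div 2" using m t by simp
        have "(5*(t-1) + 7) mod (n div 2) = (2 + n div 2) mod (n div 2)" by (simp only: e)
        also have "\<dots> = 2 mod (n div 2)" by (rule mod_add_self2)
        also have "\<dots> = 2" using m t by simp
        finally have "j = (5*(t-1) + 7) mod (n div 2)" using jq r True by simp
        moreover have "t - 1 < t" using t by simp
        ultimately show ?thesis using vj a2 base_mem1 adj21[OF OS_mem(4)] by blast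
      next
        case False
        have "j = (5*(q-1) + 7) mod (n div 2)" using jq r m False by simp
        moreover have "q - 1 < t" using jq by simp
        ultimately show ?thesis using vj a2 base_mem1 adj21[OF OS_mem(4)] by blast
      qed
    next
      assume r: "r = 3"
      have "j = (5*q + 3) mod (n div 2)" using jq r m by simp
      then show ?thesis using vj a2 base_mem1[OF jq(3)] adj21[OF OS_mem(3)] by blast
    next
      assume "r = 4" then show ?thesis using aj(3) a2 jq base_mem2[OF jq(3)] by auto
    qed
  qed
qed



definition base2 :: "nat \<Rightarrow> (nat \<times> nat) set" where
  "base2 t = base t \<union> {(1, 5*t+1), (2, 5*t)}"

lemma base2_card: "card (base2 t) \<le> 2*t+2"
proof -
  have "card (base2 t) \<le> card (base t) + card {(1::nat, 5*t+1), (2::nat, 5*t)}"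
    unfolding base2_def by (rule card_Un_le)
  also have "card {(1::nat, 5*t+1), (2::nat, 5*t)} \<le> 2" by (simp add: card_insert_le_m1)
  finally show ?thesis using base_card[of t] by simp
qed
lemma base2_not1: "t \<ge> 2 \<Longrightarrow> (1, 1) \<notin> base2 t" unfolding base2_def using base_not1 by auto
lemma base2_not2: "t \<ge> 2 \<Longrightarrow> (2, 0) \<notin> base2 t" unfolding base2_def using base_not2 by auto

lemma dom2:
  assumes m: "n div 2 = 5*t+2" and t: "t \<ge> 2"
  shows "dominating (knodel_vertices n) (knodel_adj 4 n) (base2 t)"
  unfolding dominating_def
proof (intro conjI ballI)
  show "base2 t \<subseteq> knodel_vertices n"
  proof
    fix v assume v: "v \<in> base2 t"
    obtain a x where "v = (a,x)" by (cases v)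
    then show "v \<in> knodel_vertices n" using base_side[of a x t] v m unfolding base2_def by (auto simp: V_char)
  qed
next
  fix v assume v: "v \<in> knodel_vertices n - base2 t"
  obtain a j where vj: "v = (a,j)" by (cases v)
  then have aj: "a = 1 \<or> a = 2" "j < 5*t+2" "(a,j) \<notin> base2 t" using v m V_char by auto
  have b1: "\<And>q. q < t \<Longrightarrow> (1, 5*q) \<in> base2 t" using base_mem1 unfolding base2_def by blast
  have b2: "\<And>q. q < t \<Longrightarrow> (2, 5*q+4) \<in> base2 t" using base_mem2 unfolding base2_def by blast
  have e1: "(1, 5*t+1) \<in> base2 t" "(2, 5*t) \<in> base2 t" unfolding base2_def by auto
  show "\<exists>d\<in>base2 t. knodel_adj 4 n v d"
  proof (cases "j < 5*t")
    case False
    then have "j = 5*t \<or> j = 5*t+1" using aj by auto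
    then show ?thesis
    proof
      assume j: "j = 5*t"
      then have a1: "a = 1" using aj e1 by auto
      have "5*t = (j + 0) mod (n div 2)" using j m by simp
      then show ?thesis using vj a1 e1 adj12[OF OS_mem(1)] by blast
    next
      assume j: "j = 5*t+1"
      then have a2: "a = 2" using aj e1 by auto
      have "j = (5*t+1 + 0) mod (n div 2)" using j m by simp
      then show ?thesis using vj a2 e1 adj21[OF OS_mem(1)] by blast
    qed
  next
    case jlt: True
  define q where "q = j div 5"
  define r where "r = j mod 5"
  have jq: "j = 5*q + r" "r < 5" "q < t" unfolding q_def r_def using jlt by auto
  show "\<exists>d\<in>base2 t. knodel_adj 4 n v d"
  proof (cases "a = 1")
    case True
    have "r = 0 \<or> r = 1 \<or> r = 2 \<or> r = 3 \<or> r = 4" using jq by auto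
    then show ?thesis
    proof (elim disjE)
      assume "r = 0" then show ?thesis using aj(3) True jq b1[OF jq(3)] by auto
    next
      assume r: "r = 1"
      have "5*q+4 = (j + 3) mod (n div 2)" using jq r m by simp
      then show ?thesis using vj True b2[OF jq(3)] adj12[OF OS_mem(3)] by blast
    next
      assume r: "r = 2"
      show ?thesis
      proof (cases "q + 1 < t")
        case True2: True
        have "5*(q+1)+4 = (j + 7) mod (n div 2)" using jq r m True2 by simp
        then show ?thesis using vj True b2[OF True2] adj12[OF OS_mem(4)] by blast
      next
        case False
        then have "q = t - 1" using jq by simp
        then have "5*t = (j + 3) mod (n div 2)" using jq r m t by simp
        then show ?thesis using vj True e1 adj12[OF OS_mem(3)] by blast
      qed
    next
      assume r: "r = 3"
      have "5*q+4 = (j + 1) mod (n div 2)" using jq r m by simp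
      then show ?thesis using vj True b2[OF jq(3)] adj12[OF OS_mem(2)] by blast
    next
      assume r: "r = 4"
      have "5*q+4 = (j + 0) mod (n div 2)" using jq r m by simp
      then show ?thesis using vj True b2[OF jq(3)] adj12[OF OS_mem(1)] by blast
    qed
  next
    case False
    then have a2: "a = 2" using aj by simp
    have "r = 0 \<or> r = 1 \<or> r = 2 \<or> r = 3 \<or> r = 4" using jq by auto
    then show ?thesis
    proof (elim disjE)
      assume r: "r = 0"
      have "j = (5*q + 0) mod (n div 2)" using jq r m by simp
      then show ?thesis using vj a2 b1[OF jq(3)] adj21[OF OS_mem(1)] by blast
    next
      assume r: "r = 1"
      have "j = (5*q + 1) mod (n div 2)" using jq r m by simp
      then show ?thesis using vj a2 b1[OF jq(3)] adj21[OF OS_mem(2)] by blast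
    next
      assume r: "r = 2"
      show ?thesis
      proof (cases "q = 0")
        case True
        have e: "5*t+1 + 3 = 2 + n div 2" using m t by simp
        have "(5*t+1 + 3) mod (n div 2) = (2 + n div 2) mod (n div 2)" by (simp only: e)
        also have "\<dots> = 2 mod (n div 2)" by (rule mod_add_self2)
        also have "\<dots> = 2" using m t by simp
        finally have "j = (5*t+1 + 3) mod (n div 2)" using jq r True by simp
        then show ?thesis using vj a2 e1 adj21[OF OS_mem(3)] by blast
      next
        case False
        have "j = (5*(q-1) + 7) mod (n div 2)" using jq r m False by simp
        moreover have "q - 1 < t" using jq by simp
        ultimately show ?thesis using vj a2 b1 adj21[OF OS_mem(4)] by blast
      qed
    next
      assume r: "r = 3"
      have "j = (5*q + 3) mod (n div 2)" using jq r m by simp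
      then show ?thesis using vj a2 b1[OF jq(3)] adj21[OF OS_mem(3)] by blast
    next
      assume "r = 4" then show ?thesis using aj(3) a2 jq b2[OF jq(3)] by auto
    qed
  qed
  qed
qed



definition sh :: "nat \<Rightarrow> nat \<Rightarrow> nat \<times> nat \<Rightarrow> nat \<times> nat" where
  "sh m c v = (fst v, (snd v + c) mod m)"

lemma mod_comm3: "((x + r) mod m + c) mod m = ((x + c) mod m + r) mod (m::nat)"
proof -
  have "((x + r) mod m + c) mod m = (x + r + c) mod m" by (simp add: mod_add_left_eq)
  also have "\<dots> = (x + c + r) mod m" by (simp add: add.commute add.left_commute)
  also have "\<dots> = ((x + c) mod m + r) mod m" by (simp add: mod_add_left_eq)
  finally show ?thesis .
qed

lemma sh_adj:
  assumes "knodel_adj 4 n v w"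
  shows "knodel_adj 4 n (sh (n div 2) c v) (sh (n div 2) c w)"
proof -
  obtain a x b y where vw: "v = (a,x)" "w = (b,y)" by (cases v, cases w)
  show ?thesis using assms unfolding vw sh_def adj_iff
    by (auto simp: mod_comm3)
qed

lemma V_prod: "knodel_vertices n = {1,2} \<times> {..<n div 2}" unfolding knodel_vertices_def by auto

lemma sh_V: "v \<in> knodel_vertices n \<Longrightarrow> sh (n div 2) c v \<in> knodel_vertices n"
  unfolding V_prod sh_def by (cases v) auto

lemma sh_inv:
  assumes "v \<in> knodel_vertices n" "c \<le> n div 2"
  shows "sh (n div 2) c (sh (n div 2) (n div 2 - c) v) = v"
proof -
  obtain a x where v: "v = (a,x)" by (cases v)
  have x: "x < n div 2" using assms(1) v V_char by auto
  have "((x + (n div 2 - c)) mod (n div 2) + c) mod (n div 2) = (x + (n div 2 - c) + c) mod (n div 2)"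
    by (simp add: mod_add_left_eq)
  also have "x + (n div 2 - c) + c = x + n div 2" using assms(2) by simp
  finally show ?thesis unfolding sh_def v using x by simp
qed

lemma sh_inv2:
  assumes "v \<in> knodel_vertices n" "c \<le> n div 2"
  shows "sh (n div 2) (n div 2 - c) (sh (n div 2) c v) = v"
proof -
  obtain a x where v: "v = (a,x)" by (cases v)
  have x: "x < n div 2" using assms(1) v V_char by auto
  have "((x + c) mod (n div 2) + (n div 2 - c)) mod (n div 2) = (x + c + (n div 2 - c)) mod (n div 2)"
    by (simp add: mod_add_left_eq)
  also have "x + c + (n div 2 - c) = x + n div 2" using assms(2) by simp
  finally show ?thesis unfolding sh_def v using x by simp
qed

lemma dom_sh:
  assumes dom: "dominating (knodel_vertices n) (knodel_adj 4 n) D0" and c: "c \<le> n div 2"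
  shows "dominating (knodel_vertices n) (knodel_adj 4 n) (sh (n div 2) c ` D0)"
  unfolding dominating_def
proof (intro conjI ballI)
  have DV: "D0 \<subseteq> knodel_vertices n" using dom unfolding dominating_def by auto
  then show "sh (n div 2) c ` D0 \<subseteq> knodel_vertices n" using sh_V by blast
  fix v assume v: "v \<in> knodel_vertices n - sh (n div 2) c ` D0"
  define v' where "v' = sh (n div 2) (n div 2 - c) v"
  have v'V: "v' \<in> knodel_vertices n" unfolding v'_def using v sh_V by blast
  have vv: "sh (n div 2) c v' = v" unfolding v'_def using sh_inv v c by blast
  have "v' \<notin> D0" using v vv by blast
  then obtain d where d: "d \<in> D0" "knodel_adj 4 n v' d" using dom v'V unfolding dominating_def by blast
  then have "knodel_adj 4 n v (sh (n div 2) c d)" using sh_adj[OF d(2), of c] vv by simp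
  then show "\<exists>d\<in>sh (n div 2) c ` D0. knodel_adj 4 n v d" using d(1) by blast
qed

lemma avoid:
  assumes dom: "dominating (knodel_vertices n) (knodel_adj 4 n) D0"
    and n1: "(1,1) \<notin> D0" and n2: "(2,0) \<notin> D0" and u: "u \<in> knodel_vertices n" and m: "1 < n div 2"
  shows "\<exists>D. dominating (knodel_vertices n) (knodel_adj 4 n) D \<and> u \<notin> D \<and> card D \<le> card D0"
proof -
  have DV: "D0 \<subseteq> knodel_vertices n" using dom unfolding dominating_def by auto
  obtain a h where uh: "u = (a,h)" by (cases u)
  then have ah: "a = 1 \<or> a = 2" "h < n div 2" using u V_char by auto
  define wj where "wj = (if a = 1 then 1 else (0::nat))"
  have wD: "(a, wj) \<notin> D0" using ah n1 n2 unfolding wj_def by auto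
  have wV: "(a, wj) \<in> knodel_vertices n" using ah m unfolding wj_def V_char by auto
  define c where "c = (h + (n div 2 - wj)) mod (n div 2)"
  have c: "c \<le> n div 2" unfolding c_def using m by simp
  have "(wj + c) mod (n div 2) = (wj + (h + (n div 2 - wj))) mod (n div 2)"
    unfolding c_def by (simp add: mod_add_right_eq)
  also have "wj + (h + (n div 2 - wj)) = h + n div 2" using m unfolding wj_def by auto
  finally have shw: "sh (n div 2) c (a, wj) = u" unfolding sh_def uh using ah by simp
  have "u \<notin> sh (n div 2) c ` D0"
  proof
    assume "u \<in> sh (n div 2) c ` D0"
    then obtain d where d: "d \<in> D0" "u = sh (n div 2) c d" by blast
    have "sh (n div 2) (n div 2 - c) u = d" using sh_inv2[of d n c] d DV c by auto
    moreover have "sh (n div 2) (n div 2 - c) u = (a, wj)" using sh_inv2[OF wV c] shw by simp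
    ultimately show False using d(1) wD by simp
  qed
  moreover have "card (sh (n div 2) c ` D0) \<le> card D0" by (rule card_image_le) (use DV V_finite finite_subset in blast)
  ultimately show ?thesis using dom_sh[OF dom c] by blast
qed



lemma dn_eq:
  assumes fin: "finite V'" and D: "dominating V' E D" "card D \<le> g"
    and lb: "\<And>D. dominating V' E D \<Longrightarrow> g \<le> card D"
  shows "domination_number V' E = g"
  unfolding domination_number_def
proof (rule Min_eqI)
  have "{card D |D. dominating V' E D} \<subseteq> card ` Pow V'" unfolding dominating_def by auto
  then show "finite {card D |D. dominating V' E D}" using fin finite_subset by blast
  show "\<And>y. y \<in> {card D |D. dominating V' E D} \<Longrightarrow> g \<le> y" using lb by blast
  show "g \<in> {card D |D. dominating V' E D}" using D lb[OF D(1)] by (intro CollectI exI[of _ D]) simp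
qed

lemma card_V: "card (knodel_vertices n) = 2 * (n div 2)"
  unfolding V_prod by (simp add: card_cartesian_product)

lemma stable_gen:
  fixes n g :: nat
  assumes lbu: "\<And>u D. u \<in> knodel_vertices n \<Longrightarrow> dominating (knodel_vertices n - {u}) (knodel_adj 4 n) D \<Longrightarrow> g \<le> card D"
    and ub: "\<And>u. u \<in> knodel_vertices n \<Longrightarrow> \<exists>D. dominating (knodel_vertices n) (knodel_adj 4 n) D \<and> u \<notin> D \<and> card D \<le> g"
    and g: "g < 2 * (n div 2)"
  shows "gamma_stable (knodel_vertices n) (knodel_adj 4 n)"
  unfolding gamma_stable_def
proof
  fix u assume u: "u \<in> knodel_vertices n"
  let ?V = "knodel_vertices n" and ?E = "knodel_adj 4 n"
  have red: "dominating (?V - {w}) ?E D" if "dominating ?V ?E D" "w \<in> ?V" "w \<notin> D" for D w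
    using that unfolding dominating_def by auto
  have lbV: "g \<le> card D" if d: "dominating ?V ?E D" for D
  proof (rule ccontr)
    assume "\<not> g \<le> card D"
    then have "card D < card ?V" using g card_V[of n] by simp
    then have "\<not> ?V \<subseteq> D" using card_mono[OF _ ] by (meson d dominating_def finite_subset V_finite leD)
    then obtain w where w: "w \<in> ?V" "w \<notin> D" by blast
    then show False using lbu[OF w(1) red[OF d w]] \<open>\<not> g \<le> card D\<close> by simp
  qed
  obtain D where D: "dominating ?V ?E D" "u \<notin> D" "card D \<le> g" using ub[OF u] by blast
  have e1: "domination_number ?V ?E = g" by (rule dn_eq[OF V_finite D(1) D(3) lbV])
  have e2: "domination_number (?V - {u}) ?E = g"
    by (rule dn_eq[OF _ red[OF D(1) u D(2)] D(3) lbu[OF u]]) (use V_finite in simp)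
  show "domination_number (?V - {u}) ?E = domination_number ?V ?E" using e1 e2 by simp
qed

theorem lemma4p2:
  fixes n :: nat
  assumes "even n" and "n \<ge> 16"
    and "n mod 10 = 0 \<or> n mod 10 = 4"
  shows "gamma_stable (knodel_vertices n) (knodel_adj 4 n)"
proof -
  define t where "t = n div 10"
  from assms(3) show ?thesis
  proof
    assume h: "n mod 10 = 0"
    have m: "n div 2 = 5*t" "t \<ge> 2" using h assms(2) unfolding t_def by auto
    show ?thesis
    proof (rule stable_gen[of n "2*t"])
      show "\<And>u D. u \<in> knodel_vertices n \<Longrightarrow> dominating (knodel_vertices n - {u}) (knodel_adj 4 n) D \<Longrightarrow> 2*t \<le> card D"
        using LB0[OF m] by blast
      show "\<And>u. u \<in> knodel_vertices n \<Longrightarrow> \<exists>D. dominating (knodel_vertices n) (knodel_adj 4 n) D \<and> u \<notin> D \<and> card D \<le> 2*t"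
      proof -
        fix u assume u: "u \<in> knodel_vertices n"
        have "1 < n div 2" using m by simp
        then obtain D where "dominating (knodel_vertices n) (knodel_adj 4 n) D" "u \<notin> D" "card D \<le> card (base t)"
          using avoid[OF dom0[OF m] base_not1 base_not2 u] by blast
        then show "\<exists>D. dominating (knodel_vertices n) (knodel_adj 4 n) D \<and> u \<notin> D \<and> card D \<le> 2*t"
          using base_card[of t] le_trans by blast
      qed
      show "2*t < 2 * (n div 2)" using m by simp
    qed
  next
    assume h: "n mod 10 = 4"
    have nn: "n = 10*t + 4" using h unfolding t_def by presburger
    have m: "n div 2 = 5*t+2" "t \<ge> 2" using nn assms(2) by presburger+
    show ?thesis
    proof (rule stable_gen[of n "2*t+2"])
      show "\<And>u D. u \<in> knodel_vertices n \<Longrightarrow> dominating (knodel_vertices n - {u}) (knodel_adj 4 n) D \<Longrightarrow> 2*t+2 \<le> card D"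
        using LB4[OF m] by blast
      show "\<And>u. u \<in> knodel_vertices n \<Longrightarrow> \<exists>D. dominating (knodel_vertices n) (knodel_adj 4 n) D \<and> u \<notin> D \<and> card D \<le> 2*t+2"
      proof -
        fix u assume u: "u \<in> knodel_vertices n"
        have "1 < n div 2" using m by simp
        then obtain D where "dominating (knodel_vertices n) (knodel_adj 4 n) D" "u \<notin> D" "card D \<le> card (base2 t)"
          using avoid[OF dom2[OF m] base2_not1[OF m(2)] base2_not2[OF m(2)] u] by blast
        then show "\<exists>D. dominating (knodel_vertices n) (knodel_adj 4 n) D \<and> u \<notin> D \<and> card D \<le> 2*t+2"
          using base2_card[of t] le_trans by blast
      qed
      show "2*t+2 < 2 * (n div 2)" using m by simp
    qed
  qed
qed

end
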